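(* Let $E$ be an arbitrary directed graph. Then every descending chain $U_1\supseteq U_2\supseteq\cdots$ of compact open invariant subsets of $G_E^{(0)}$ stabilizes. Moreover, every nonempty compact open invariant subset of $G_E^{(0)}$ contains a minimal one, i.e. a nonempty compact open invariant subset containing no strictly smaller nonempty compact open invariant subset.
   Context: For a directed graph $E$ (paths $\mu=\mu_1\cdots\mu_n$ with $r(\mu_i)=s(\mu_{i+1})$, $|\mu|=n$, $\mathrm{Path}(E)$ the finite paths including vertices, $E^\infty$ infinite paths, sinks = vertices emitting no edges, $\mathrm{Inf}(E)$ = vertices emitting infinitely many edges), let $X=E^\infty\cup\{\mu\in\mathrm{Path}(E): r(\mu)\text{ a sink}\}\cup\{\mu: r(\mu)\in\mathrm{Inf}(E)\}$ and $G_E=\{(\alpha x,|\alpha|-|\beta|,\beta x):\alpha,\beta\in\mathrm{Path}(E),x\in X,r(\alpha)=r(\beta)=s(x)\}$, with product $(x,k,y)(y,l,z)=(x,k+l,z)$, inverse $(y,-k,x)$, range $(x,0,x)$, source $(y,0,y)$; unit space $G_E^{(0)}=\{(x,0,x)\}\cong X$, topologized by the basis of compact open sets $Z(\mu)\setminus\bigcup_{e\in F}Z(\mu e)$ with $Z(\mu)=\{\mu x:x\in X,s(x)=r(\mu)\}$ and $F\subseteq s^{-1}(r(\mu))$ finite. $U\subseteq G_E^{(0)}$ is invariant if for every $\gamma\in G_E$, $s(\gamma)\in U$ iff $r(\gamma)\in U$. *)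

theory Defs
  imports "HOL-Analysis.Analysis"
begin

text \<open>Paths are represented by
the datatype below: FinP v es is the finite path starting at the vertex v and
traversing the edge list es (FinP v [] is the vertex v itself, of length 0);
InfP f is the infinite path f 0 f 1 f 2 ...\<close>

datatype ('v,'e) gpath = FinP 'v "'e list" | InfP "nat \<Rightarrow> 'e"

definition is_graph :: "'v set \<Rightarrow> 'e set \<Rightarrow> ('e \<Rightarrow> 'v) \<Rightarrow> ('e \<Rightarrow> 'v) \<Rightarrow> bool" where
  "is_graph V Ed src rng \<longleftrightarrow> src ` Ed \<subseteq> V \<and> rng ` Ed \<subseteq> V"

definition fin_paths :: "'v set \<Rightarrow> 'e set \<Rightarrow> ('e \<Rightarrow> 'v) \<Rightarrow> ('e \<Rightarrow> 'v) \<Rightarrow> ('v,'e) gpath set" where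
  "fin_paths V Ed src rng = {FinP v es | v es. v \<in> V \<and> set es \<subseteq> Ed
      \<and> (es \<noteq> [] \<longrightarrow> src (es ! 0) = v)
      \<and> (\<forall>i. Suc i < length es \<longrightarrow> rng (es ! i) = src (es ! Suc i))}"

definition inf_paths :: "'e set \<Rightarrow> ('e \<Rightarrow> 'v) \<Rightarrow> ('e \<Rightarrow> 'v) \<Rightarrow> ('v,'e) gpath set" where
  "inf_paths Ed src rng = {InfP f | f. \<forall>i. f i \<in> Ed \<and> rng (f i) = src (f (Suc i))}"

fun gp_len :: "('v,'e) gpath \<Rightarrow> nat" where
  "gp_len (FinP v es) = length es"
| "gp_len (InfP f) = 0"  (* only used for finite paths *)

fun gp_src :: "('e \<Rightarrow> 'v) \<Rightarrow> ('v,'e) gpath \<Rightarrow> 'v" where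
  "gp_src src (FinP v es) = v"
| "gp_src src (InfP f) = src (f 0)"

fun gp_rng :: "('e \<Rightarrow> 'v) \<Rightarrow> ('v,'e) gpath \<Rightarrow> 'v" where
  "gp_rng rng (FinP v es) = (if es = [] then v else rng (last es))"
| "gp_rng rng (InfP f) = undefined"

fun gp_cat :: "('v,'e) gpath \<Rightarrow> ('v,'e) gpath \<Rightarrow> ('v,'e) gpath" where
  "gp_cat (FinP v es) (FinP w fs) = FinP v (es @ fs)"
| "gp_cat (FinP v es) (InfP f) = InfP (\<lambda>n. if n < length es then es ! n else f (n - length es))"
| "gp_cat (InfP f) y = InfP f"

definition sinks :: "'v set \<Rightarrow> 'e set \<Rightarrow> ('e \<Rightarrow> 'v) \<Rightarrow> 'v set" where
  "sinks V Ed src = {v \<in> V. \<forall>e\<in>Ed. src e \<noteq> v}"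

definition inf_emitters :: "'v set \<Rightarrow> 'e set \<Rightarrow> ('e \<Rightarrow> 'v) \<Rightarrow> 'v set" where
  "inf_emitters V Ed src = {v \<in> V. infinite {e \<in> Ed. src e = v}}"

definition bpaths :: "'v set \<Rightarrow> 'e set \<Rightarrow> ('e \<Rightarrow> 'v) \<Rightarrow> ('e \<Rightarrow> 'v) \<Rightarrow> ('v,'e) gpath set" where
  "bpaths V Ed src rng = inf_paths Ed src rng
     \<union> {\<mu> \<in> fin_paths V Ed src rng. gp_rng rng \<mu> \<in> sinks V Ed src}
     \<union> {\<mu> \<in> fin_paths V Ed src rng. gp_rng rng \<mu> \<in> inf_emitters V Ed src}"

definition graph_groupoid :: "'v set \<Rightarrow> 'e set \<Rightarrow> ('e \<Rightarrow> 'v) \<Rightarrow> ('e \<Rightarrow> 'v)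
    \<Rightarrow> (('v,'e) gpath \<times> int \<times> ('v,'e) gpath) set" where
  "graph_groupoid V Ed src rng =
     {(gp_cat \<alpha> x, int (gp_len \<alpha>) - int (gp_len \<beta>), gp_cat \<beta> x) | \<alpha> \<beta> x.
        \<alpha> \<in> fin_paths V Ed src rng \<and> \<beta> \<in> fin_paths V Ed src rng \<and> x \<in> bpaths V Ed src rng
        \<and> gp_rng rng \<alpha> = gp_src src x \<and> gp_rng rng \<beta> = gp_src src x}"

text \<open>Cylinder sets Z(mu) in X (unit space identified with X via (x,0,x) <-> x).\<close>
definition cyl :: "'v set \<Rightarrow> 'e set \<Rightarrow> ('e \<Rightarrow> 'v) \<Rightarrow> ('e \<Rightarrow> 'v) \<Rightarrow> ('v,'e) gpath
    \<Rightarrow> ('v,'e) gpath set" where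
  "cyl V Ed src rng \<mu> = {gp_cat \<mu> x | x. x \<in> bpaths V Ed src rng \<and> gp_src src x = gp_rng rng \<mu>}"

definition cyl_basis :: "'v set \<Rightarrow> 'e set \<Rightarrow> ('e \<Rightarrow> 'v) \<Rightarrow> ('e \<Rightarrow> 'v) \<Rightarrow> ('v,'e) gpath set set" where
  "cyl_basis V Ed src rng =
     {cyl V Ed src rng \<mu> - (\<Union>e\<in>F. cyl V Ed src rng (gp_cat \<mu> (FinP (src e) [e]))) | \<mu> F.
        \<mu> \<in> fin_paths V Ed src rng \<and> finite F \<and> F \<subseteq> {e \<in> Ed. src e = gp_rng rng \<mu>}}"

definition unit_topology :: "'v set \<Rightarrow> 'e set \<Rightarrow> ('e \<Rightarrow> 'v) \<Rightarrow> ('e \<Rightarrow> 'v) \<Rightarrow> ('v,'e) gpath topology" where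
  "unit_topology V Ed src rng = topology_generated_by (cyl_basis V Ed src rng)"

definition invariant :: "'v set \<Rightarrow> 'e set \<Rightarrow> ('e \<Rightarrow> 'v) \<Rightarrow> ('e \<Rightarrow> 'v) \<Rightarrow> ('v,'e) gpath set \<Rightarrow> bool" where
  "invariant V Ed src rng U \<longleftrightarrow>
     (\<forall>(x,k,y) \<in> graph_groupoid V Ed src rng. y \<in> U \<longleftrightarrow> x \<in> U)"

definition cpt_open_inv :: "'v set \<Rightarrow> 'e set \<Rightarrow> ('e \<Rightarrow> 'v) \<Rightarrow> ('e \<Rightarrow> 'v) \<Rightarrow> ('v,'e) gpath set \<Rightarrow> bool" where
  "cpt_open_inv V Ed src rng U \<longleftrightarrow> U \<subseteq> bpaths V Ed src rng
     \<and> compactin (unit_topology V Ed src rng) U \<and> openin (unit_topology V Ed src rng) U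
     \<and> invariant V Ed src rng U"

end

theory Submission imports Defs begin

lemma inf_paths_iff: "InfP f \<in> inf_paths Ed src rng \<longleftrightarrow> (\<forall>i. f i \<in> Ed \<and> rng (f i) = src (f (Suc i)))"
  by (auto simp: inf_paths_def)

lemma fin_paths_iff: "FinP v es \<in> fin_paths V Ed src rng \<longleftrightarrow> v \<in> V \<and> set es \<subseteq> Ed \<and> (es \<noteq> [] \<longrightarrow> src (es!0) = v) \<and> (\<forall>i. Suc i < length es \<longrightarrow> rng (es!i) = src (es!Suc i))"
  by (auto simp: fin_paths_def)

lemma InfP_notin_fin[simp]: "InfP f \<notin> fin_paths V Ed src rng"
  by (auto simp: fin_paths_def)

lemma FinP_notin_inf[simp]: "FinP v es \<notin> inf_paths Ed src rng"
  by (auto simp: inf_paths_def)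

lemma fin_paths_FinP: "\<mu> \<in> fin_paths V Ed src rng \<Longrightarrow> \<exists>v es. \<mu> = FinP v es"
  by (auto simp: fin_paths_def)

lemma cat_fin:
  assumes "FinP v es \<in> fin_paths V Ed src rng" "FinP w fs \<in> fin_paths V Ed src rng"
    "gp_rng rng (FinP v es) = w"
  shows "FinP v (es @ fs) \<in> fin_paths V Ed src rng"
proof -
  have A: "v \<in> V" "set es \<subseteq> Ed" "es \<noteq> [] \<longrightarrow> src (es!0) = v"
     "\<forall>i. Suc i < length es \<longrightarrow> rng (es!i) = src (es!Suc i)"
    using assms(1) by (auto simp: fin_paths_iff)
  have B: "w \<in> V" "set fs \<subseteq> Ed" "fs \<noteq> [] \<longrightarrow> src (fs!0) = w"
     "\<forall>i. Suc i < length fs \<longrightarrow> rng (fs!i) = src (fs!Suc i)"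
    using assms(2) by (auto simp: fin_paths_iff)
  show ?thesis
  proof (cases "es = []")
    case True
    then show ?thesis using assms B by auto
  next
    case False
    have r: "rng (last es) = w" using assms(3) False by simp
    have "\<forall>i. Suc i < length (es@fs) \<longrightarrow> rng ((es@fs)!i) = src ((es@fs)!Suc i)"
    proof (intro allI impI)
      fix i assume i: "Suc i < length (es@fs)"
      consider "Suc i < length es" | "Suc i = length es" | "Suc i > length es" by linarith
      then show "rng ((es@fs)!i) = src ((es@fs)!Suc i)"
      proof cases
        case 1 then show ?thesis using A by (simp add: nth_append)
      next
        case 2
        then have "fs \<noteq> []" using i by auto
        moreover have "es ! i = last es" using 2 False by (simp add: last_conv_nth del: One_nat_def) (metis diff_Suc_1)
        ultimately show ?thesis using 2 r B by (simp add: nth_append)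
      next
        case 3
        then have "Suc (i - length es) < length fs" using i by auto
        then show ?thesis using 3 B by (simp add: nth_append Suc_diff_le)
      qed
    qed
    then show ?thesis using A B False by (auto simp: fin_paths_iff nth_append)
  qed
qed

lemma cat_inf:
  assumes "FinP v es \<in> fin_paths V Ed src rng" "InfP f \<in> inf_paths Ed src rng"
    "gp_rng rng (FinP v es) = src (f 0)"
  shows "gp_cat (FinP v es) (InfP f) \<in> inf_paths Ed src rng"
proof -
  have A: "set es \<subseteq> Ed" 
     "\<forall>i. Suc i < length es \<longrightarrow> rng (es!i) = src (es!Suc i)"
    using assms(1) by (auto simp: fin_paths_iff)
  have B: "\<forall>i. f i \<in> Ed \<and> rng (f i) = src (f (Suc i))" using assms(2) by (simp add: inf_paths_iff)
  show ?thesis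
  proof (cases "es = []")
    case True
    then show ?thesis using assms by simp
  next
    case False
    have r: "rng (last es) = src (f 0)" using assms(3) False by simp
    show ?thesis unfolding gp_cat.simps inf_paths_iff
    proof (intro allI conjI)
      fix i
      show "(if i < length es then es ! i else f (i - length es)) \<in> Ed" using A B by auto
      consider "Suc i < length es" | "Suc i = length es" | "Suc i > length es" by linarith
      then show "rng (if i < length es then es ! i else f (i - length es)) =
         src (if Suc i < length es then es ! Suc i else f (Suc i - length es))"
      proof cases
        case 1 then show ?thesis using A by simp
      next
        case 2
        have "es ! i = last es" using 2 False by (simp add: last_conv_nth del: One_nat_def) (metis diff_Suc_1)
        then show ?thesis using 2 r by simp
      next
        case 3 then show ?thesis using B by (simp add: Suc_diff_le)
      qed
    qed
  qed
qed


lemma gp_src_cat: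
  assumes "\<mu> \<in> fin_paths V Ed src rng" "gp_rng rng \<mu> = gp_src src y"
  shows "gp_src src (gp_cat \<mu> y) = gp_src src \<mu>"
proof -
  obtain v es where m: "\<mu> = FinP v es" using assms(1) fin_paths_FinP by blast
  have A: "es \<noteq> [] \<longrightarrow> src (es!0) = v" using assms(1) m by (simp add: fin_paths_iff)
  show ?thesis using A assms(2) m by (cases y) auto
qed

lemma gp_rng_cat_fin:
  assumes "gp_rng rng (FinP v es) = w"
  shows "gp_rng rng (gp_cat (FinP v es) (FinP w fs)) = gp_rng rng (FinP w fs)"
  using assms by auto

lemma bpaths_src_V:
  assumes "is_graph V Ed src rng" "x \<in> bpaths V Ed src rng"
  shows "gp_src src x \<in> V"
  using assms by (auto simp: bpaths_def is_graph_def inf_paths_def fin_paths_def)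

lemma cat_bpaths:
  assumes "\<mu> \<in> fin_paths V Ed src rng" "y \<in> bpaths V Ed src rng" "gp_rng rng \<mu> = gp_src src y"
  shows "gp_cat \<mu> y \<in> bpaths V Ed src rng"
proof -
  obtain v es where m: "\<mu> = FinP v es" using assms(1) fin_paths_FinP by blast
  show ?thesis
  proof (cases y)
    case (FinP w fs)
    have yf: "y \<in> fin_paths V Ed src rng" "gp_rng rng y \<in> sinks V Ed src \<or> gp_rng rng y \<in> inf_emitters V Ed src"
      using assms(2) FinP by (auto simp: bpaths_def)
    have "gp_cat \<mu> y \<in> fin_paths V Ed src rng" using cat_fin[of v es V Ed src rng w fs] assms yf m FinP by auto
    moreover have "gp_rng rng (gp_cat \<mu> y) = gp_rng rng y" using assms(3) m FinP by auto
    ultimately show ?thesis using yf by (auto simp: bpaths_def)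
  next
    case (InfP f)
    have "y \<in> inf_paths Ed src rng" using assms(2) InfP by (auto simp: bpaths_def)
    then show ?thesis using cat_inf[of v es V Ed src rng f] assms m InfP by (auto simp: bpaths_def)
  qed
qed

lemma cat_assoc:
  "gp_cat (FinP a es) (gp_cat (FinP b fs) z) = gp_cat (FinP a (es @ fs)) z"
  by (cases z) (auto simp: nth_append fun_eq_iff diff_diff_left)

lemma cat_vertex: "gp_src src y = w \<Longrightarrow> gp_cat (FinP w []) y = y"
  by (cases y) auto

lemma cat_nil[simp]: "gp_cat (FinP v es) (FinP w []) = FinP v es"
  by simp

fun gp_nth :: "('v,'e) gpath \<Rightarrow> nat \<Rightarrow> 'e option" where
  "gp_nth (FinP v es) i = (if i < length es then Some (es!i) else None)"
| "gp_nth (InfP f) i = Some (f i)"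

lemma gp_nth_cat: "gp_nth (gp_cat (FinP v es) y) i = (if i < length es then Some (es!i) else gp_nth y (i - length es))"
  by (cases y) (auto simp: nth_append)

lemma in_groupoid:
  assumes "\<alpha> \<in> fin_paths V Ed src rng" "\<beta> \<in> fin_paths V Ed src rng" "x \<in> bpaths V Ed src rng"
    "gp_rng rng \<alpha> = gp_src src x" "gp_rng rng \<beta> = gp_src src x"
  shows "(gp_cat \<alpha> x, int (gp_len \<alpha>) - int (gp_len \<beta>), gp_cat \<beta> x) \<in> graph_groupoid V Ed src rng"
  using assms unfolding graph_groupoid_def by blast

lemma inv_transfer:
  assumes "invariant V Ed src rng U" "\<alpha> \<in> fin_paths V Ed src rng" "\<beta> \<in> fin_paths V Ed src rng" "x \<in> bpaths V Ed src rng"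
    "gp_rng rng \<alpha> = gp_src src x" "gp_rng rng \<beta> = gp_src src x"
  shows "gp_cat \<beta> x \<in> U \<longleftrightarrow> gp_cat \<alpha> x \<in> U"
  using in_groupoid[OF assms(2-)] assms(1) unfolding invariant_def by fastforce

lemma vertex_fin: "w \<in> V \<Longrightarrow> FinP w [] \<in> fin_paths V Ed src rng"
  by (simp add: fin_paths_iff)


definition pre :: "('e \<Rightarrow> 'v) \<Rightarrow> (nat \<Rightarrow> 'e) \<Rightarrow> nat \<Rightarrow> ('v,'e) gpath" where
  "pre src f n = FinP (src (f 0)) (map f [0..<n])"

lemma pre_fin:
  assumes "is_graph V Ed src rng" "InfP f \<in> inf_paths Ed src rng"
  shows "pre src f n \<in> fin_paths V Ed src rng"
proof -
  have B: "\<forall>i. f i \<in> Ed \<and> rng (f i) = src (f (Suc i))" using assms(2) by (simp add: inf_paths_iff)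
  then have "src (f 0) \<in> V" using assms(1) by (auto simp: is_graph_def)
  then show ?thesis using B by (auto simp: fin_paths_iff pre_def)
qed

lemma pre_rng:
  assumes "InfP f \<in> inf_paths Ed src rng"
  shows "gp_rng rng (pre src f n) = src (f n)"
proof (cases n)
  case 0 then show ?thesis by (simp add: pre_def)
next
  case (Suc k)
  have B: "\<forall>i. f i \<in> Ed \<and> rng (f i) = src (f (Suc i))" using assms by (simp add: inf_paths_iff)
  then show ?thesis using Suc by (simp add: pre_def)
qed

lemma shift_inf:
  assumes "InfP f \<in> inf_paths Ed src rng"
  shows "InfP (\<lambda>i. f (i + n)) \<in> inf_paths Ed src rng"
  using assms by (simp add: inf_paths_iff)

lemma shift_bpaths:
  assumes "InfP f \<in> inf_paths Ed src rng"
  shows "InfP (\<lambda>i. f (i + n)) \<in> bpaths V Ed src rng"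
  using shift_inf[OF assms] by (simp add: bpaths_def)

lemma decomp: "InfP f = gp_cat (pre src f n) (InfP (\<lambda>i. f (i + n)))"
  by (auto simp: pre_def fun_eq_iff)

lemma in_cyl_pre:
  assumes "is_graph V Ed src rng" "InfP f \<in> inf_paths Ed src rng"
  shows "InfP f \<in> cyl V Ed src rng (pre src f n)"
  unfolding cyl_def using decomp[of f src n] shift_bpaths[OF assms(2), of n V] pre_rng[OF assms(2), of n]
  by auto

lemma map_split: "n \<le> m \<Longrightarrow> map f [0..<m] = map f [0..<n] @ map (\<lambda>i. f (i+n)) [0..<m-n]"
proof -
  assume "n \<le> m"
  then have "[0..<m] = [0..<n] @ [n..<m]" using upt_add_eq_append[of 0 n "m-n"] by simp
  moreover have "[n..<m] = map (\<lambda>i. i + n) [0..<m-n]" using \<open>n \<le> m\<close> by (simp add: map_add_upt)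
  ultimately show ?thesis by simp
qed

lemma pre_mono:
  assumes "is_graph V Ed src rng" "InfP f \<in> inf_paths Ed src rng" "n \<le> m"
  shows "cyl V Ed src rng (pre src f m) \<subseteq> cyl V Ed src rng (pre src f n)"
proof
  fix x assume "x \<in> cyl V Ed src rng (pre src f m)"
  then obtain z where z: "x = gp_cat (pre src f m) z" "z \<in> bpaths V Ed src rng" "gp_src src z = src (f m)"
    using pre_rng[OF assms(2)] by (auto simp: cyl_def)
  define g where "g = (\<lambda>i. f (i + n))"
  have g: "InfP g \<in> inf_paths Ed src rng" using shift_inf[OF assms(2)] g_def by simp
  have pm: "pre src f m = FinP (src (f 0)) (map f [0..<n] @ map g [0..<m-n])"
    using map_split[OF assms(3)] by (simp add: pre_def g_def)
  have pg: "pre src g (m - n) = FinP (src (f n)) (map g [0..<m-n])" by (simp add: pre_def g_def)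
  define z' where "z' = gp_cat (pre src g (m-n)) z"
  have x: "x = gp_cat (pre src f n) z'" using z(1) pm pg unfolding z'_def pre_def by (simp add: cat_assoc)
  have rg: "gp_rng rng (pre src g (m-n)) = gp_src src z" using pre_rng[OF g] z(3) g_def assms(3) by simp
  have "z' \<in> bpaths V Ed src rng" unfolding z'_def
    by (rule cat_bpaths[OF pre_fin[OF assms(1) g] z(2) rg])
  moreover have "gp_src src z' = src (f n)"
    unfolding z'_def using gp_src_cat[OF pre_fin[OF assms(1) g] rg] by (simp add: pre_def g_def)
  ultimately show "x \<in> cyl V Ed src rng (pre src f n)"
    using x pre_rng[OF assms(2)] by (auto simp: cyl_def)
qed


lemma cyl_InfP_pre:
  assumes "\<mu> \<in> fin_paths V Ed src rng" "InfP f \<in> cyl V Ed src rng \<mu>"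
  shows "\<mu> = pre src f (gp_len \<mu>)"
proof -
  obtain v es where m: "\<mu> = FinP v es" using assms(1) fin_paths_FinP by blast
  obtain y where y: "InfP f = gp_cat \<mu> y" "y \<in> bpaths V Ed src rng" "gp_src src y = gp_rng rng \<mu>"
    using assms(2) by (auto simp: cyl_def)
  obtain g where g: "y = InfP g" using y(1) m by (cases y) auto
  have f: "f = (\<lambda>n. if n < length es then es ! n else g (n - length es))" using y(1) m g by simp
  have "map f [0..<length es] = es" by (rule nth_equalityI) (auto simp: f)
  moreover have "src (f 0) = v"
  proof -
    have "gp_src src (InfP f) = gp_src src \<mu>" using gp_src_cat[OF assms(1) y(3)[symmetric]] y(1) by simp
    then show ?thesis using m by simp
  qed
  ultimately show ?thesis using m by (simp add: pre_def)
qed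

lemma open_inf_nbhd:
  assumes G: "is_graph V Ed src rng"
    and Op: "generate_topology_on (cyl_basis V Ed src rng) W"
  shows "InfP f \<in> W \<Longrightarrow> InfP f \<in> inf_paths Ed src rng \<Longrightarrow> \<exists>n. cyl V Ed src rng (pre src f n) \<subseteq> W"
  using Op
proof (induction arbitrary: f)
  case Empty then show ?case by simp
next
  case (Int a b)
  then obtain n1 n2 where "cyl V Ed src rng (pre src f n1) \<subseteq> a" "cyl V Ed src rng (pre src f n2) \<subseteq> b" by blast
  then have "cyl V Ed src rng (pre src f (max n1 n2)) \<subseteq> a \<inter> b"
    using pre_mono[OF G Int.prems(2), of n1 "max n1 n2"] pre_mono[OF G Int.prems(2), of n2 "max n1 n2"] by auto
  then show ?case by blast
next
  case (UN K)
  then obtain k where "k \<in> K" "InfP f \<in> k" by blast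
  then show ?case using UN by blast
next
  case (Basis s)
  then obtain \<mu> F where s: "s = cyl V Ed src rng \<mu> - (\<Union>e\<in>F. cyl V Ed src rng (gp_cat \<mu> (FinP (src e) [e])))"
    and mu: "\<mu> \<in> fin_paths V Ed src rng"
    unfolding cyl_basis_def by blast
  have fin: "InfP f \<in> inf_paths Ed src rng" by fact
  have inmu: "InfP f \<in> cyl V Ed src rng \<mu>" using Basis s by blast
  define L where "L = gp_len \<mu>"
  have mupre: "\<mu> = pre src f L" using cyl_InfP_pre[OF mu inmu] L_def by simp
  have "cyl V Ed src rng (pre src f (Suc L)) \<subseteq> s"
  proof
    fix x assume "x \<in> cyl V Ed src rng (pre src f (Suc L))"
    then obtain z where z: "x = gp_cat (pre src f (Suc L)) z" "z \<in> bpaths V Ed src rng" "gp_src src z = src (f (Suc L))"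
      using pre_rng[OF fin] by (auto simp: cyl_def)
    have B: "\<forall>i. f i \<in> Ed \<and> rng (f i) = src (f (Suc i))" using fin by (simp add: inf_paths_iff)
    have sV: "src (f L) \<in> V" using G B by (auto simp: is_graph_def)
    have e1: "FinP (src (f L)) [f L] \<in> fin_paths V Ed src rng" using B sV by (simp add: fin_paths_iff)
    have r1: "gp_rng rng (FinP (src (f L)) [f L]) = gp_src src z" using B z(3) by simp
    define z' where "z' = gp_cat (FinP (src (f L)) [f L]) z"
    have z'b: "z' \<in> bpaths V Ed src rng" unfolding z'_def by (rule cat_bpaths[OF e1 z(2) r1])
    have z's: "gp_src src z' = src (f L)" unfolding z'_def using gp_src_cat[OF e1 r1] by simp
    have x: "x = gp_cat \<mu> z'" using z(1) unfolding z'_def mupre by (simp add: pre_def cat_assoc)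
    have "x \<in> cyl V Ed src rng \<mu>" using x z'b z's pre_rng[OF fin, of L] mupre by (auto simp: cyl_def)
    moreover have "x \<notin> cyl V Ed src rng (gp_cat \<mu> (FinP (src e) [e]))" if eF: "e \<in> F" for e
    proof
      assume "x \<in> cyl V Ed src rng (gp_cat \<mu> (FinP (src e) [e]))"
      then obtain w where w: "x = gp_cat (gp_cat \<mu> (FinP (src e) [e])) w" by (auto simp: cyl_def)
      have "gp_nth x L = Some e" using w mupre by (simp add: pre_def gp_nth_cat nth_append)
      moreover have "gp_nth x L = Some (f L)" using z(1) by (simp add: pre_def gp_nth_cat nth_append)
      ultimately have ef: "e = f L" by simp
      have "gp_cat \<mu> (FinP (src e) [e]) = pre src f (Suc L)" using mupre ef by (simp add: pre_def)
      then have "InfP f \<in> cyl V Ed src rng (gp_cat \<mu> (FinP (src e) [e]))" using in_cyl_pre[OF G fin] by simp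
      then show False using Basis.prems(1) s eF by blast
    qed
    ultimately show "x \<in> s" using s by blast
  qed
  then show ?case by blast
qed





definition Tset :: "'v set \<Rightarrow> 'e set \<Rightarrow> ('e \<Rightarrow> 'v) \<Rightarrow> ('e \<Rightarrow> 'v) \<Rightarrow> ('v,'e) gpath set \<Rightarrow> 'v set" where
  "Tset V Ed src rng U = {w \<in> gp_src src ` U. cyl V Ed src rng (FinP w []) \<subseteq> U}"

definition Pset :: "('v,'e) gpath set \<Rightarrow> 'v set" where
  "Pset U = {w. FinP w [] \<in> U}"

lemma Tset_mono: "U \<subseteq> U' \<Longrightarrow> Tset V Ed src rng U \<subseteq> Tset V Ed src rng U'"
  by (auto simp: Tset_def)

lemma Pset_mono: "U \<subseteq> U' \<Longrightarrow> Pset U \<subseteq> Pset U'"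
  by (auto simp: Pset_def)

lemma determine:
  fixes V :: "'v set" and Ed :: "'e set"
  assumes G: "is_graph V Ed src rng"
    and U'b: "U' \<subseteq> bpaths V Ed src rng"
    and U'o: "openin (unit_topology V Ed src rng) U'"
    and iU: "invariant V Ed src rng U" and iU': "invariant V Ed src rng U'"
    and T: "Tset V Ed src rng U' \<subseteq> Tset V Ed src rng U" and P: "Pset U' \<subseteq> Pset U"
  shows "U' \<subseteq> U"
proof
  fix x assume xU': "x \<in> U'"
  have xb: "x \<in> bpaths V Ed src rng" using xU' U'b by blast
  show "x \<in> U"
  proof (cases x)
    case (InfP f)
    have fin: "InfP f \<in> inf_paths Ed src rng" using xb InfP by (auto simp: bpaths_def)
    have gen: "generate_topology_on (cyl_basis V Ed src rng) U'"
      using U'o by (simp add: unit_topology_def openin_topology_generated_by_iff)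
    obtain n where n: "cyl V Ed src rng (pre src f n) \<subseteq> U'"
      using open_inf_nbhd[OF G gen] xU' InfP fin by blast
    define w where "w = src (f n)"
    have B: "\<forall>i. f i \<in> Ed \<and> rng (f i) = src (f (Suc i))" using fin by (simp add: inf_paths_iff)
    have wV: "w \<in> V" using G B w_def by (auto simp: is_graph_def)
    have wf: "FinP w [] \<in> fin_paths V Ed src rng" using wV by (rule vertex_fin)
    have pf: "pre src f n \<in> fin_paths V Ed src rng" by (rule pre_fin[OF G fin])
    have pr: "gp_rng rng (pre src f n) = w" using pre_rng[OF fin] w_def by simp
    have key: "z \<in> U'" if z: "z \<in> bpaths V Ed src rng" "gp_src src z = w" for z
    proof -
      have "gp_cat (pre src f n) z \<in> cyl V Ed src rng (pre src f n)" unfolding cyl_def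
        apply (rule CollectI, rule exI[of _ z]) using z pr by simp
      then have "gp_cat (pre src f n) z \<in> U'" using n by blast
      then have "gp_cat (FinP w []) z \<in> U'"
        using inv_transfer[OF iU' pf wf z(1)] z pr by simp
      then show ?thesis using cat_vertex[OF z(2)] by simp
    qed
    define y :: "('v,'e) gpath" where "y = InfP (\<lambda>i. f (i + n))"
    have yb: "y \<in> bpaths V Ed src rng" unfolding y_def by (rule shift_bpaths[OF fin])
    have ys: "gp_src src y = w" by (simp add: y_def w_def)
    have "cyl V Ed src rng (FinP w []) \<subseteq> U'"
    proof
      fix z assume "z \<in> cyl V Ed src rng (FinP w [])"
      then obtain z0 where z0: "z = gp_cat (FinP w []) z0" "z0 \<in> bpaths V Ed src rng" "gp_src src z0 = gp_rng rng (FinP w [])"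
        unfolding cyl_def by blast
      have z0s: "gp_src src z0 = w" using z0(3) by simp
      show "z \<in> U'" using key[OF z0(2) z0s] cat_vertex[OF z0s] z0(1) by simp
    qed
    moreover have "w \<in> gp_src src ` U'" using ys[symmetric] key[OF yb ys] by (rule image_eqI)
    ultimately have "w \<in> Tset V Ed src rng U'" by (simp add: Tset_def)
    then have "cyl V Ed src rng (FinP w []) \<subseteq> U" using T by (auto simp: Tset_def)
    moreover have "y \<in> cyl V Ed src rng (FinP w [])"
    proof -
      have "y = gp_cat (FinP w []) y \<and> y \<in> bpaths V Ed src rng \<and> gp_src src y = gp_rng rng (FinP w [])"
        using yb ys cat_vertex[OF ys] by simp
      then show ?thesis unfolding cyl_def by blast
    qed
    ultimately have "y \<in> U" by blast
    then have "gp_cat (FinP w []) y \<in> U" using cat_vertex[OF ys] by simp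
    then have "gp_cat (pre src f n) y \<in> U" using inv_transfer[OF iU wf pf yb] ys pr by simp
    then show ?thesis using InfP decomp[of f src n] y_def by simp
  next
    case (FinP v es)
    have xf: "x \<in> fin_paths V Ed src rng" and wr: "gp_rng rng x \<in> sinks V Ed src \<or> gp_rng rng x \<in> inf_emitters V Ed src"
      using xb FinP by (auto simp: bpaths_def)
    define w where "w = gp_rng rng x"
    have wV: "w \<in> V" using wr w_def by (auto simp: sinks_def inf_emitters_def)
    have wf: "FinP w [] \<in> fin_paths V Ed src rng" using wV by (rule vertex_fin)
    have wb: "FinP w [] \<in> bpaths V Ed src rng" using wf wr w_def by (auto simp: bpaths_def)
    have c1: "gp_cat x (FinP w []) = x" using FinP by simp
    have c2: "gp_cat (FinP w []) (FinP w []) = FinP w []" by simp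
    have "FinP w [] \<in> U'" using inv_transfer[OF iU' xf wf wb] xU' c1 c2 w_def by simp
    then have "FinP w [] \<in> U" using P by (auto simp: Pset_def)
    then show ?thesis using inv_transfer[OF iU xf wf wb] c1 c2 w_def by simp
  qed
qed

lemma compact_fin_src:
  assumes G: "is_graph V Ed src rng" and Wb: "W \<subseteq> bpaths V Ed src rng"
    and C: "compactin (unit_topology V Ed src rng) W"
  shows "finite (gp_src src ` W)"
proof -
  let ?C = "(\<lambda>v. cyl V Ed src rng (FinP v [])) ` V"
  have op: "\<forall>c\<in>?C. openin (unit_topology V Ed src rng) c"
  proof
    fix c assume "c \<in> ?C"
    then obtain v where v: "v \<in> V" "c = cyl V Ed src rng (FinP v [])" by blast
    have "\<exists>\<mu> F. c = cyl V Ed src rng \<mu> - (\<Union>e\<in>F. cyl V Ed src rng (gp_cat \<mu> (FinP (src e) [e])))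
        \<and> \<mu> \<in> fin_paths V Ed src rng \<and> finite F \<and> F \<subseteq> {e \<in> Ed. src e = gp_rng rng \<mu>}"
      apply (rule exI[of _ "FinP v []"], rule exI[of _ "{}"])
      apply (intro conjI)
         apply (simp only: v(2) UN_empty Diff_empty)
        apply (rule vertex_fin[OF v(1)])
       apply (rule finite.emptyI)
      apply (rule empty_subsetI)
      done
    then have "c \<in> cyl_basis V Ed src rng" unfolding cyl_basis_def by (simp only: mem_Collect_eq)
    then show "openin (unit_topology V Ed src rng) c"
      unfolding unit_topology_def by (rule topology_generated_by_Basis)
  qed
  have cov: "W \<subseteq> \<Union>?C"
  proof
    fix x assume x: "x \<in> W"
    then have xb: "x \<in> bpaths V Ed src rng" using Wb by blast
    have "gp_src src x \<in> V" by (rule bpaths_src_V[OF G xb])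
    moreover have "x \<in> cyl V Ed src rng (FinP (gp_src src x) [])"
    proof -
      have "x = gp_cat (FinP (gp_src src x) []) x \<and> x \<in> bpaths V Ed src rng \<and> gp_src src x = gp_rng rng (FinP (gp_src src x) [])"
        using xb cat_vertex[of src x "gp_src src x"] by simp
      then show ?thesis unfolding cyl_def by blast
    qed
    ultimately show "x \<in> \<Union>?C" by blast
  qed
  obtain F where F: "finite F" "F \<subseteq> ?C" "W \<subseteq> \<Union>F"
  proof -
    have "\<forall>U. (\<forall>c\<in>U. openin (unit_topology V Ed src rng) c) \<and> W \<subseteq> \<Union>U \<longrightarrow> (\<exists>F. finite F \<and> F \<subseteq> U \<and> W \<subseteq> \<Union>F)"
      using conjunct2[OF C[unfolded compactin_def]] .
    then have "\<exists>F. finite F \<and> F \<subseteq> ?C \<and> W \<subseteq> \<Union>F" using op cov by simp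
    then show ?thesis using that by blast
  qed
  obtain S where S: "S \<subseteq> V" "finite S" "F = (\<lambda>v. cyl V Ed src rng (FinP v [])) ` S"
    using finite_subset_image[OF F(1) F(2)] by blast
  have "gp_src src ` W \<subseteq> S"
  proof
    fix a assume "a \<in> gp_src src ` W"
    then obtain x where x: "x \<in> W" "a = gp_src src x" by blast
    then obtain v where v: "v \<in> S" "x \<in> cyl V Ed src rng (FinP v [])" using F(3) S(3) by blast
    then obtain z where z: "x = gp_cat (FinP v []) z" "gp_src src z = v" by (auto simp: cyl_def)
    then have "x = z" using cat_vertex by metis
    then show "a \<in> S" using x z v by simp
  qed
  then show ?thesis using S(2) finite_subset by blast
qed


lemma fin_TP:
  assumes G: "is_graph V Ed src rng" and C: "cpt_open_inv V Ed src rng U"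
  shows "finite (Tset V Ed src rng U)" "finite (Pset U)"
proof -
  have f: "finite (gp_src src ` U)"
    using compact_fin_src[OF G] C by (simp add: cpt_open_inv_def)
  have "Tset V Ed src rng U \<subseteq> gp_src src ` U" by (auto simp: Tset_def)
  then show "finite (Tset V Ed src rng U)" using f finite_subset by blast
  have "Pset U \<subseteq> gp_src src ` U"
  proof
    fix w assume "w \<in> Pset U"
    then have "FinP w [] \<in> U" by (simp add: Pset_def)
    then show "w \<in> gp_src src ` U" by (metis gp_src.simps(1) image_eqI)
  qed
  then show "finite (Pset U)" using f finite_subset by blast
qed

lemma eq_of:
  assumes G: "is_graph V Ed src rng" and C: "cpt_open_inv V Ed src rng U" and C': "cpt_open_inv V Ed src rng U'"
    and sub: "U \<subseteq> U'"
    and le: "card (Tset V Ed src rng U') + card (Pset U') \<le> card (Tset V Ed src rng U) + card (Pset U)"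
  shows "U = U'"
proof -
  have t: "Tset V Ed src rng U \<subseteq> Tset V Ed src rng U'" by (rule Tset_mono[OF sub])
  have p: "Pset U \<subseteq> Pset U'" by (rule Pset_mono[OF sub])
  have ct: "card (Tset V Ed src rng U) \<le> card (Tset V Ed src rng U')" by (rule card_mono[OF fin_TP(1)[OF G C'] t])
  have cp: "card (Pset U) \<le> card (Pset U')" by (rule card_mono[OF fin_TP(2)[OF G C'] p])
  have "Tset V Ed src rng U = Tset V Ed src rng U'"
    by (rule card_subset_eq[OF fin_TP(1)[OF G C'] t]) (use ct cp le in linarith)
  moreover have "Pset U = Pset U'"
    by (rule card_subset_eq[OF fin_TP(2)[OF G C'] p]) (use ct cp le in linarith)
  ultimately have "U' \<subseteq> U"
    using determine[OF G, of U' U] C C' by (simp add: cpt_open_inv_def)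
  then show ?thesis using sub by blast
qed

theorem lemma3p8:
  fixes V :: "'v set" and Ed :: "'e set" and src rng :: "'e \<Rightarrow> 'v"
  assumes "is_graph V Ed src rng"
  shows "(\<forall>U :: nat \<Rightarrow> ('v,'e) gpath set.
            (\<forall>n. cpt_open_inv V Ed src rng (U n)) \<and> (\<forall>n. U (Suc n) \<subseteq> U n)
            \<longrightarrow> (\<exists>N. \<forall>n\<ge>N. U n = U N))
       \<and> (\<forall>U. cpt_open_inv V Ed src rng U \<and> U \<noteq> {} \<longrightarrow>
            (\<exists>W. W \<subseteq> U \<and> W \<noteq> {} \<and> cpt_open_inv V Ed src rng W
                 \<and> (\<forall>W'. W' \<subset> W \<and> cpt_open_inv V Ed src rng W' \<longrightarrow> W' = {})))"
proof -
  note G = assms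
  define m :: "('v,'e) gpath set \<Rightarrow> nat" where "m = (\<lambda>U. card (Tset V Ed src rng U) + card (Pset U))"
  have part1: "\<exists>N. \<forall>n\<ge>N. U n = U N"
    if C: "\<forall>n. cpt_open_inv V Ed src rng (U n)" and D: "\<forall>n. U (Suc n) \<subseteq> U n"
    for U :: "nat \<Rightarrow> ('v,'e) gpath set"
  proof -
    define N where "N = arg_min (\<lambda>k. m (U k)) (\<lambda>k. True)"
    have Nmin: "\<forall>k. m (U N) \<le> m (U k)"
      using arg_min_nat_lemma[of "\<lambda>k. True" 0 "\<lambda>k. m (U k)"] N_def by simp
    have "U n = U N" if nN: "n \<ge> N" for n
    proof -
      have sub: "U n \<subseteq> U N" using lift_Suc_antimono_le[of U, OF _ nN] D by blast
      show ?thesis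
        by (rule eq_of[OF G C[rule_format] C[rule_format] sub]) (use Nmin in \<open>simp add: m_def\<close>)
    qed
    then show ?thesis by blast
  qed
  have part2: "\<exists>W. W \<subseteq> U \<and> W \<noteq> {} \<and> cpt_open_inv V Ed src rng W
                 \<and> (\<forall>W'. W' \<subset> W \<and> cpt_open_inv V Ed src rng W' \<longrightarrow> W' = {})"
    if C: "cpt_open_inv V Ed src rng U" and ne: "U \<noteq> {}" for U :: "('v,'e) gpath set"
  proof -
    define P where "P = (\<lambda>W. W \<subseteq> U \<and> W \<noteq> {} \<and> cpt_open_inv V Ed src rng W)"
    have PU: "P U" using C ne by (simp add: P_def)
    define W where "W = arg_min m P"
    have W: "P W" "\<forall>y. P y \<longrightarrow> m W \<le> m y"
      using arg_min_nat_lemma[of P U m, OF PU] W_def by auto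
    have "W' = {}" if W': "W' \<subset> W" "cpt_open_inv V Ed src rng W'" for W'
    proof (rule ccontr)
      assume "W' \<noteq> {}"
      then have "P W'" using W' W(1) by (auto simp: P_def)
      then have "m W \<le> m W'" using W(2) by blast
      then have "W' = W" using eq_of[OF G W'(2), of W] W(1) W'(1) by (auto simp: P_def m_def)
      then show False using W'(1) by blast
    qed
    then show ?thesis using W(1) unfolding P_def by blast
  qed
  show ?thesis using part1 part2 by blast
qed

end
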